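(* For every $n\in\mathbb{N}$, every nonempty chain $c_k$ over $[n]$ with complementary chain $c'_{n-k}$, and all formulas $\varphi,\psi$, the following are derivable in $\mathbf{CPN}_n$: (i) $\vdash_{(n)}\perp_{c_k}\to_{(n)}\neg_{c'_{n-k}}(\varphi\wedge_{(n)}\neg_{c'_{n-k}}\varphi)$; (ii) $\vdash_{(n)}\neg_{c_k}\varphi\wedge_{(n)}\neg_{c_k}\psi\to_{(n)}\neg_{c_k}(\varphi\wedge_{(n)}\psi)$; (iii) $\vdash_{(n)}\neg_{c_k}(\varphi\vee_{(n)}\psi)\to_{(n)}\neg_{c_k}\varphi\vee_{(n)}\neg_{c_k}\psi$; (iv) $\vdash_{(n)}\neg_{c_k}(\varphi\wedge_{(n)}\psi)\to_{(n)}\neg_{c_k}\varphi\vee_{(n)}\neg_{c_k}\psi$; (v) $\vdash_{(n)}\neg_{c_k}\varphi\wedge_{(n)}\neg_{c_k}\psi\to_{(n)}\neg_{c_k}(\varphi\vee_{(n)}\psi)$.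
   Context: Fix $n\in\mathbb{N}$, $n\ge 1$, and write $[n]=\{1,\dots,n\}$. Chains: a chain over $[n]$ is a finite sequence of distinct elements of $[n]$; chains with the same length and the same symbols are identified, so a chain is effectively a subset of $[n]$. $c_k$ denotes a chain with $k$ symbols, $\epsilon$ the empty chain, and $(n)$ the chain consisting of all symbols of $[n]$. For chains $c,d$: the concatenation $c\cdot d$ is the chain of symbols occurring in $c$ or in $d$; the coconcatenation $c\otimes d$ is the chain of symbols occurring in exactly one of $c,d$; $d$ is a subchain of $c$ if every symbol of $d$ is a symbol of $c$. The complementary chain $c'_{n-k}$ of $c_k$ is the chain of the symbols of $[n]$ not occurring in $c_k$. Language of $\mathbf{CPN}_n$: a countable set $P_n$ of propositional letters; constants $\perp_c$ for each chain $c$ over $[n]$ with $1\le |c|\le n-1$, and constants $\perp_{(n)}$ (contradiction) and $\top_{(n)}$ (truth); a unary connective $\neg_c$ for each nonempty chain $c$ over $[n]$ ($\neg_{(n)}$ is the strong negation; the $\neg_c$ with $|c|\le n-1$ are weak negations); a binary connective $\to_{(n)}$. Formulas: propositional letters and constants are formulas; if $\varphi,\psi$ are formulas then so are $\neg_c\varphi$ and $(\varphi\to_{(n)}\psi)$. Conventions: $\neg_\epsilon\varphi:=\varphi$, $\perp_\epsilon:=\top_{(n)}$, and $\perp_c$ for $c=(n)$ means $\perp_{(n)}$. Abbreviations: $\varphi\wedge_{(n)}\psi:=\neg_{(n)}(\varphi\to_{(n)}\neg_{(n)}\psi)$, $\varphi\vee_{(n)}\psi:=\neg_{(n)}\varphi\to_{(n)}\psi$,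 $\varphi\leftrightarrow_{(n)}\psi:=(\varphi\to_{(n)}\psi)\wedge_{(n)}(\psi\to_{(n)}\varphi)$. Axioms of $\mathbf{CPN}_n$, for all formulas $\varphi,\psi,\chi$ and all nonempty chains $c_k,c_r$ over $[n]$: (A1) $\varphi\to_{(n)}(\psi\to_{(n)}\varphi)$; (A2) $(\varphi\to_{(n)}(\psi\to_{(n)}\chi))\to_{(n)}((\varphi\to_{(n)}\psi)\to_{(n)}(\varphi\to_{(n)}\chi))$; (A3) $(\neg_{(n)}\psi\to_{(n)}\neg_{(n)}\varphi)\to_{(n)}((\neg_{(n)}\psi\to_{(n)}\varphi)\to_{(n)}\psi)$; (A4) $\varphi\to_{(n)}(\perp_{c_k}\to_{(n)}\neg_{c_k}\varphi)$; (A5) $\neg_{c_k}\neg_{c_r}\varphi\leftrightarrow_{(n)}\neg_{c_k\otimes c_r}\varphi$; (A6) $\neg_{c_k}\perp_{c_r}\leftrightarrow_{(n)}\perp_{c_k\otimes c_r}$; (A7) $\perp_{c_k}\to_{(n)}\perp_{c_r}$, whenever $c_r$ is a subchain of $c_k$. The only rule of inference is modus ponens (from $\varphi$ and $\varphi\to_{(n)}\psi$ infer $\psi$). For a set $\Sigma$ of formulas, $\Sigma\vdash_{(n)}\varphi$ means there is a finite sequence of formulas ending with $\varphi$, each of which is an axiom, a member of $\Sigma$, or obtained from two earlier members by modus ponens; $\vdash_{(n)}\varphi$ means $\emptyset\vdash_{(n)}\varphi$. *)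

theory Defs
  imports Main
begin

text \<open>Chains over [n] are identified with subsets of {1..n}.\<close>

datatype form =
    Letter nat
  | BotC "nat set"          (* \<bottom>_c, c nonempty; BotC {1..n} is \<bottom>_(n) *)
  | TopC
  | NegC "nat set" form     (* \<not>_c, c nonempty; NegC {1..n} is the strong negation *)
  | ImpC form form

fun wf :: "nat \<Rightarrow> form \<Rightarrow> bool" where
  "wf n (Letter p) = True"
| "wf n (BotC c) = (c \<noteq> {} \<and> c \<subseteq> {1..n})"
| "wf n TopC = True"
| "wf n (NegC c \<phi>) = (c \<noteq> {} \<and> c \<subseteq> {1..n} \<and> wf n \<phi>)"
| "wf n (ImpC \<phi> \<psi>) = (wf n \<phi> \<and> wf n \<psi>)"

definition neg :: "nat set \<Rightarrow> form \<Rightarrow> form" where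
  "neg c \<phi> = (if c = {} then \<phi> else NegC c \<phi>)"

definition bot :: "nat set \<Rightarrow> form" where
  "bot c = (if c = {} then TopC else BotC c)"

definition full :: "nat \<Rightarrow> nat set" where
  "full n = {1..n}"

definition sneg :: "nat \<Rightarrow> form \<Rightarrow> form" where
  "sneg n \<phi> = NegC (full n) \<phi>"

definition conj :: "nat \<Rightarrow> form \<Rightarrow> form \<Rightarrow> form" where
  "conj n \<phi> \<psi> = sneg n (ImpC \<phi> (sneg n \<psi>))"

definition disj :: "nat \<Rightarrow> form \<Rightarrow> form \<Rightarrow> form" where
  "disj n \<phi> \<psi> = ImpC (sneg n \<phi>) \<psi>"

definition iff :: "nat \<Rightarrow> form \<Rightarrow> form \<Rightarrow> form" where
  "iff n \<phi> \<psi> = conj n (ImpC \<phi> \<psi>) (ImpC \<psi> \<phi>)"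

text \<open>coconcatenation = symmetric difference\<close>
definition cocat :: "nat set \<Rightarrow> nat set \<Rightarrow> nat set" where
  "cocat c d = (c - d) \<union> (d - c)"

definition chain :: "nat \<Rightarrow> nat set \<Rightarrow> bool" where
  "chain n c = (c \<noteq> {} \<and> c \<subseteq> {1..n})"

inductive axiom :: "nat \<Rightarrow> form \<Rightarrow> bool" for n where
  A1: "\<lbrakk>wf n \<phi>; wf n \<psi>\<rbrakk> \<Longrightarrow> axiom n (ImpC \<phi> (ImpC \<psi> \<phi>))"
| A2: "\<lbrakk>wf n \<phi>; wf n \<psi>; wf n \<chi>\<rbrakk> \<Longrightarrow>
     axiom n (ImpC (ImpC \<phi> (ImpC \<psi> \<chi>)) (ImpC (ImpC \<phi> \<psi>) (ImpC \<phi> \<chi>)))"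
| A3: "\<lbrakk>wf n \<phi>; wf n \<psi>\<rbrakk> \<Longrightarrow>
     axiom n (ImpC (ImpC (sneg n \<psi>) (sneg n \<phi>)) (ImpC (ImpC (sneg n \<psi>) \<phi>) \<psi>))"
| A4: "\<lbrakk>wf n \<phi>; chain n c\<rbrakk> \<Longrightarrow> axiom n (ImpC \<phi> (ImpC (bot c) (neg c \<phi>)))"
| A5: "\<lbrakk>wf n \<phi>; chain n c; chain n d\<rbrakk> \<Longrightarrow>
     axiom n (iff n (neg c (neg d \<phi>)) (neg (cocat c d) \<phi>))"
| A6: "\<lbrakk>chain n c; chain n d\<rbrakk> \<Longrightarrow>
     axiom n (iff n (neg c (bot d)) (bot (cocat c d)))"
| A7: "\<lbrakk>chain n c; chain n d; d \<subseteq> c\<rbrakk> \<Longrightarrow> axiom n (ImpC (bot c) (bot d))"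

inductive derivable :: "nat \<Rightarrow> form set \<Rightarrow> form \<Rightarrow> bool" for n \<Sigma> where
  ax: "axiom n \<phi> \<Longrightarrow> derivable n \<Sigma> \<phi>"
| hyp: "\<phi> \<in> \<Sigma> \<Longrightarrow> derivable n \<Sigma> \<phi>"
| mp: "\<lbrakk>derivable n \<Sigma> \<phi>; derivable n \<Sigma> (ImpC \<phi> \<psi>)\<rbrakk> \<Longrightarrow> derivable n \<Sigma> \<psi>"

abbreviation provable :: "nat \<Rightarrow> form \<Rightarrow> bool" where
  "provable n \<phi> \<equiv> derivable n {} \<phi>"

end

theory Submission imports Defs begin

context fixes n :: nat assumes n1: "n \<ge> 1" begin

lemma full_ne: "{1..n} \<noteq> {}" using n1 by auto

lemma wf_sneg[simp]: "wf n (sneg n A) = wf n A" using n1 by (auto simp: sneg_def full_def)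
lemma wf_conj[simp]: "wf n (conj n A B) = (wf n A \<and> wf n B)" by (simp add: conj_def)
lemma wf_disj[simp]: "wf n (disj n A B) = (wf n A \<and> wf n B)" by (simp add: disj_def)
lemma wf_iff[simp]: "wf n (iff n A B) = (wf n A \<and> wf n B)" by (auto simp: iff_def)
lemma wf_neg[simp]: "c \<subseteq> {1..n} \<Longrightarrow> wf n (neg c A) = wf n A" by (auto simp: neg_def)
lemma wf_bot[simp]: "c \<subseteq> {1..n} \<Longrightarrow> wf n (bot c)" by (auto simp: bot_def)
lemma cocat_sub[simp]: "c \<subseteq> {1..n} \<Longrightarrow> d \<subseteq> {1..n} \<Longrightarrow> cocat c d \<subseteq> {1..n}" by (auto simp: cocat_def)

lemma axiom_wf: "axiom n A \<Longrightarrow> wf n A"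
  by (induction rule: axiom.induct) (auto simp: chain_def neg_def bot_def cocat_def)

lemma der_wf: "derivable n \<Sigma> A \<Longrightarrow> \<forall>x\<in>\<Sigma>. wf n x \<Longrightarrow> wf n A"
  by (induction rule: derivable.induct) (auto simp: axiom_wf)

lemma weaken: "derivable n \<Sigma> A \<Longrightarrow> \<Sigma> \<subseteq> \<Sigma>' \<Longrightarrow> derivable n \<Sigma>' A"
  by (induction rule: derivable.induct) (auto intro: derivable.intros)

lemma wk: "derivable n \<Sigma> A \<Longrightarrow> derivable n (insert B \<Sigma>) A"
  using weaken by blast

lemma mp': "derivable n \<Sigma> (ImpC A B) \<Longrightarrow> derivable n \<Sigma> A \<Longrightarrow> derivable n \<Sigma> B"
  using derivable.mp by blast

lemma hyp': "derivable n (insert A \<Sigma>) A" by (simp add: derivable.hyp)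

lemma ax1: "wf n A \<Longrightarrow> wf n B \<Longrightarrow> derivable n \<Sigma> (ImpC A (ImpC B A))"
  by (intro derivable.ax axiom.A1)
lemma ax2: "wf n A \<Longrightarrow> wf n B \<Longrightarrow> wf n C \<Longrightarrow>
   derivable n \<Sigma> (ImpC (ImpC A (ImpC B C)) (ImpC (ImpC A B) (ImpC A C)))"
  by (intro derivable.ax axiom.A2)
lemma ax3: "wf n A \<Longrightarrow> wf n B \<Longrightarrow>
   derivable n \<Sigma> (ImpC (ImpC (sneg n B) (sneg n A)) (ImpC (ImpC (sneg n B) A) B))"
  by (intro derivable.ax axiom.A3)

lemma imp_refl: "wf n A \<Longrightarrow> derivable n \<Sigma> (ImpC A A)"
proof -
  assume w: "wf n A"
  have 1: "derivable n \<Sigma> (ImpC (ImpC A (ImpC (ImpC A A) A)) (ImpC (ImpC A (ImpC A A)) (ImpC A A)))"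
    using w by (intro ax2) auto
  have 2: "derivable n \<Sigma> (ImpC A (ImpC (ImpC A A) A))" using w by (intro ax1) auto
  have 3: "derivable n \<Sigma> (ImpC A (ImpC A A))" using w by (intro ax1) auto
  show ?thesis using mp'[OF mp'[OF 1 2] 3] .
qed

lemma deduction: "derivable n (insert A \<Sigma>) B \<Longrightarrow> \<forall>x\<in>\<Sigma>. wf n x \<Longrightarrow> wf n A \<Longrightarrow> derivable n \<Sigma> (ImpC A B)"
proof (induction rule: derivable.induct)
  case (ax \<phi>)
  then show ?case using axiom_wf mp'[OF ax1 derivable.ax] by blast
next
  case (hyp \<phi>)
  then show ?case
  proof (cases "\<phi> = A")
    case True then show ?thesis using hyp imp_refl by simp
  next
    case False
    then have "\<phi> \<in> \<Sigma>" using hyp by auto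
    then show ?thesis using hyp mp'[OF ax1 derivable.hyp] by blast
  qed
next
  case (mp \<phi> \<psi>)
  have WF: "\<forall>x\<in>insert A \<Sigma>. wf n x" using mp by auto
  have w1: "wf n \<phi>" using der_wf[OF mp(1) WF] .
  have w2: "wf n \<psi>" using der_wf[OF mp(2) WF] by simp
  show ?case using mp'[OF mp'[OF ax2 mp(4)] mp(3)] mp w1 w2 by blast
qed

lemma cut: "derivable n (insert A \<Sigma>) B \<Longrightarrow> derivable n \<Sigma> A \<Longrightarrow> \<forall>x\<in>\<Sigma>. wf n x \<Longrightarrow> derivable n \<Sigma> B"
  using deduction der_wf mp' by blast

lemma raa: assumes "derivable n (insert (sneg n A) \<Sigma>) B" "derivable n (insert (sneg n A) \<Sigma>) (sneg n B)"
  "\<forall>x\<in>\<Sigma>. wf n x" "wf n A" shows "derivable n \<Sigma> A"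
proof -
  have WF: "\<forall>x\<in>insert (sneg n A) \<Sigma>. wf n x" using assms by auto
  have wB: "wf n B" using der_wf[OF assms(1) WF] .
  have 1: "derivable n \<Sigma> (ImpC (sneg n A) B)" using deduction assms by simp
  have 2: "derivable n \<Sigma> (ImpC (sneg n A) (sneg n B))" using deduction assms by simp
  show ?thesis using mp'[OF mp'[OF ax3 2] 1] wB assms by blast
qed

lemma dne: "derivable n \<Sigma> (sneg n (sneg n A)) \<Longrightarrow> \<forall>x\<in>\<Sigma>. wf n x \<Longrightarrow> derivable n \<Sigma> A"
proof -
  assume a: "derivable n \<Sigma> (sneg n (sneg n A))" "\<forall>x\<in>\<Sigma>. wf n x"
  have "wf n A" using der_wf[OF a] by simp
  then show ?thesis
  using raa[where B="sneg n A", OF hyp' wk[OF a(1)] a(2)] by blast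
qed

lemma efq: "derivable n \<Sigma> A \<Longrightarrow> derivable n \<Sigma> (sneg n A) \<Longrightarrow> \<forall>x\<in>\<Sigma>. wf n x \<Longrightarrow> wf n B \<Longrightarrow> derivable n \<Sigma> B"
proof -
  assume a: "derivable n \<Sigma> A" "derivable n \<Sigma> (sneg n A)" "\<forall>x\<in>\<Sigma>. wf n x" "wf n B"
  show ?thesis using raa[where B=A, OF wk[OF a(1)] wk[OF a(2)] a(3) a(4)] .
qed

lemma negI: assumes "derivable n (insert A \<Sigma>) B" "derivable n (insert A \<Sigma>) (sneg n B)"
  "\<forall>x\<in>\<Sigma>. wf n x" "wf n A" shows "derivable n \<Sigma> (sneg n A)"
proof -
  let ?S = "insert (sneg n (sneg n A)) \<Sigma>"
  have WF: "\<forall>x\<in>?S. wf n x" using assms by auto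
  have a: "derivable n ?S A" using dne[OF hyp' WF] .
  have b: "derivable n ?S B" using cut[OF weaken[OF assms(1)] a WF] by blast
  have c: "derivable n ?S (sneg n B)" using cut[OF weaken[OF assms(2)] a WF] by blast
  show ?thesis using raa[OF b c] assms by simp
qed

lemma conjI': assumes "derivable n \<Sigma> A" "derivable n \<Sigma> B" "\<forall>x\<in>\<Sigma>. wf n x"
  shows "derivable n \<Sigma> (conj n A B)"
proof -
  have wA: "wf n A" "wf n B" using der_wf assms by auto
  show ?thesis unfolding conj_def
    apply (rule negI[where B=B])
    using mp'[OF hyp' wk[OF assms(1)]] wk[OF assms(2)] wA assms(3) by simp_all
qed

lemma conjE1: assumes "derivable n \<Sigma> (conj n A B)" "\<forall>x\<in>\<Sigma>. wf n x" shows "derivable n \<Sigma> A"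
proof -
  have w: "wf n A" "wf n B" using der_wf[OF assms(1) assms(2)] by auto
  let ?S = "insert (sneg n A) \<Sigma>"
  have WF: "\<forall>x\<in>?S. wf n x" using assms w by auto
  have "derivable n (insert A ?S) (sneg n B)"
    using efq[where A=A, OF hyp' wk[OF hyp']] WF w by simp
  then have 1: "derivable n ?S (ImpC A (sneg n B))" using deduction WF w by blast
  have 2: "derivable n ?S (sneg n (ImpC A (sneg n B)))" using wk[OF assms(1)] by (simp add: conj_def)
  show ?thesis using raa[OF 1 2] assms w by blast
qed

lemma conjE2: assumes "derivable n \<Sigma> (conj n A B)" "\<forall>x\<in>\<Sigma>. wf n x" shows "derivable n \<Sigma> B"
proof -
  have w: "wf n A" "wf n B" using der_wf[OF assms(1) assms(2)] by auto
  let ?S = "insert (sneg n B) \<Sigma>"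
  have WF: "\<forall>x\<in>?S. wf n x" using assms w by auto
  have "derivable n (insert A ?S) (sneg n B)" using wk[OF hyp'] .
  then have 1: "derivable n ?S (ImpC A (sneg n B))" using deduction WF w by blast
  have 2: "derivable n ?S (sneg n (ImpC A (sneg n B)))" using wk[OF assms(1)] by (simp add: conj_def)
  show ?thesis using raa[OF 1 2] assms w by blast
qed

lemma disjI1: assumes "derivable n \<Sigma> A" "wf n B" "\<forall>x\<in>\<Sigma>. wf n x" shows "derivable n \<Sigma> (disj n A B)"
proof -
  have w: "wf n A" using der_wf assms by auto
  have "derivable n (insert (sneg n A) \<Sigma>) B"
    using efq[where A=A, OF wk[OF assms(1)] hyp'] assms w by simp
  then show ?thesis unfolding disj_def using deduction assms w by simp
qed

lemma disjI2: assumes "derivable n \<Sigma> B" "wf n A" "\<forall>x\<in>\<Sigma>. wf n x" shows "derivable n \<Sigma> (disj n A B)"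
  unfolding disj_def using deduction[OF wk[OF assms(1)]] assms by simp

lemma disjE: assumes "derivable n \<Sigma> (disj n A B)" "derivable n (insert A \<Sigma>) C"
  "derivable n (insert B \<Sigma>) C" "\<forall>x\<in>\<Sigma>. wf n x" shows "derivable n \<Sigma> C"
proof -
  have w: "wf n A" "wf n B" using der_wf[OF assms(1) assms(4)] by auto
  have wC: "wf n C" using der_wf[OF assms(2)] assms w by auto
  let ?S = "insert (sneg n C) \<Sigma>"
  have WF: "\<forall>x\<in>?S. wf n x" using assms wC by auto
  have nA: "derivable n ?S (sneg n A)"
    by (rule negI[where B=C, OF weaken[OF assms(2)] wk[OF hyp'] WF w(1)]) blast
  have b: "derivable n ?S B" using mp'[OF wk[OF assms(1)[unfolded disj_def]] nA] .
  have c: "derivable n ?S C" using cut[OF weaken[OF assms(3)] b WF] by blast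
  show ?thesis using raa[OF c hyp'] assms wC by blast
qed

lemma iffD1: "derivable n \<Sigma> (iff n A B) \<Longrightarrow> \<forall>x\<in>\<Sigma>. wf n x \<Longrightarrow> derivable n \<Sigma> (ImpC A B)"
  unfolding iff_def using conjE1 by blast
lemma iffD2: "derivable n \<Sigma> (iff n A B) \<Longrightarrow> \<forall>x\<in>\<Sigma>. wf n x \<Longrightarrow> derivable n \<Sigma> (ImpC B A)"
  unfolding iff_def using conjE2 by blast



lemma neg_empty[simp]: "neg {} X = X" by (simp add: neg_def)
lemma neg_full: "neg {1..n} X = sneg n X" using n1 by (simp add: neg_def sneg_def full_def)
lemma cocat_self[simp]: "cocat a a = {}" by (auto simp: cocat_def)

lemma L1in: assumes "chain n a" "bot a \<in> \<Sigma>" "\<forall>x\<in>\<Sigma>. wf n x" "derivable n \<Sigma> X"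
  shows "derivable n \<Sigma> (neg a X)"
proof -
  have w: "wf n X" using der_wf[OF assms(4,3)] .
  have "derivable n \<Sigma> (ImpC X (ImpC (bot a) (neg a X)))"
    using w assms by (intro derivable.ax axiom.A4)
  then show ?thesis using derivable.mp assms(4) derivable.hyp[OF assms(2)] by blast
qed

lemma L1out: assumes "chain n a" "bot a \<in> \<Sigma>" "\<forall>x\<in>\<Sigma>. wf n x" "derivable n \<Sigma> (neg a X)"
  shows "derivable n \<Sigma> X"
proof -
  have sub: "a \<subseteq> {1..n}" using assms by (simp add: chain_def)
  have w: "wf n X" using der_wf[OF assms(4,3)] wf_neg[OF sub] by simp
  have 1: "derivable n \<Sigma> (neg a (neg a X))" using L1in[OF assms(1-3,4)] .
  have "derivable n \<Sigma> (iff n (neg a (neg a X)) (neg (cocat a a) X))"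
    using w assms by (intro derivable.ax axiom.A5)
  then have "derivable n \<Sigma> (ImpC (neg a (neg a X)) X)" using iffD1 assms by simp
  then show ?thesis using derivable.mp 1 by blast
qed

lemma L2out: assumes "chain n a" "chain n b" "a \<inter> b = {}" "a \<union> b = {1..n}"
  "bot b \<in> \<Sigma>" "\<forall>x\<in>\<Sigma>. wf n x" "derivable n \<Sigma> (neg a X)"
  shows "derivable n \<Sigma> (sneg n X)"
proof -
  have sub: "a \<subseteq> {1..n}" using assms by (simp add: chain_def)
  have w: "wf n X" using der_wf[OF assms(7,6)] wf_neg[OF sub] by simp
  have cc: "cocat b a = {1..n}" using assms by (auto simp: cocat_def)
  have 1: "derivable n \<Sigma> (neg b (neg a X))" using L1in[OF assms(2,5,6,7)] .
  have "derivable n \<Sigma> (iff n (neg b (neg a X)) (neg (cocat b a) X))"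
    using w assms by (intro derivable.ax axiom.A5)
  then have "derivable n \<Sigma> (ImpC (neg b (neg a X)) (sneg n X))"
    using iffD1 assms cc neg_full by simp
  then show ?thesis using derivable.mp 1 by blast
qed

lemma L2in: assumes "chain n a" "chain n b" "a \<inter> b = {}" "a \<union> b = {1..n}"
  "bot b \<in> \<Sigma>" "\<forall>x\<in>\<Sigma>. wf n x" "derivable n \<Sigma> (sneg n X)"
  shows "derivable n \<Sigma> (neg a X)"
proof -
  have sub: "a \<subseteq> {1..n}" using assms by (simp add: chain_def)
  have w: "wf n X" using der_wf[OF assms(7,6)] wf_sneg by simp
  have cc: "cocat b a = {1..n}" using assms by (auto simp: cocat_def)
  have "derivable n \<Sigma> (iff n (neg b (neg a X)) (neg (cocat b a) X))"
    using w assms by (intro derivable.ax axiom.A5)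
  then have "derivable n \<Sigma> (ImpC (sneg n X) (neg b (neg a X)))"
    using iffD2 assms cc neg_full by simp
  then have 1: "derivable n \<Sigma> (neg b (neg a X))" using derivable.mp assms(7) by blast
  show ?thesis using L1out[OF assms(2,5,6) 1] .
qed


lemma caseA:
  assumes WF0: "\<forall>x\<in>\<Sigma>. wf n x" and wp: "wf n \<phi>" and wq: "wf n \<psi>"
   and inA: "\<And>S X. \<Sigma> \<subseteq> S \<Longrightarrow> \<forall>x\<in>S. wf n x \<Longrightarrow> derivable n S X \<Longrightarrow> derivable n S (neg c X)"
   and outA: "\<And>S X. \<Sigma> \<subseteq> S \<Longrightarrow> \<forall>x\<in>S. wf n x \<Longrightarrow> derivable n S (neg c X) \<Longrightarrow> derivable n S X"
   and wc: "\<And>X. wf n (neg c X) = wf n X"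
  shows "derivable n \<Sigma> (ImpC (conj n (neg c \<phi>) (neg c \<psi>)) (neg c (conj n \<phi> \<psi>)))"
    and "derivable n \<Sigma> (ImpC (neg c (disj n \<phi> \<psi>)) (disj n (neg c \<phi>) (neg c \<psi>)))"
    and "derivable n \<Sigma> (ImpC (neg c (conj n \<phi> \<psi>)) (disj n (neg c \<phi>) (neg c \<psi>)))"
    and "derivable n \<Sigma> (ImpC (conj n (neg c \<phi>) (neg c \<psi>)) (neg c (disj n \<phi> \<psi>)))"
proof -
  let ?H = "conj n (neg c \<phi>) (neg c \<psi>)"
  let ?S = "insert ?H \<Sigma>"
  have WF: "\<forall>x\<in>?S. wf n x" using WF0 wp wq wc by auto
  have sub: "\<Sigma> \<subseteq> ?S" by auto
  have p: "derivable n ?S \<phi>" using outA[OF sub WF conjE1[OF hyp' WF]] .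
  have q: "derivable n ?S \<psi>" using outA[OF sub WF conjE2[OF hyp' WF]] .
  have "derivable n ?S (neg c (conj n \<phi> \<psi>))" using inA[OF sub WF conjI'[OF p q WF]] .
  then show "derivable n \<Sigma> (ImpC ?H (neg c (conj n \<phi> \<psi>)))"
    using deduction WF0 wp wq wc by simp
  have "derivable n ?S (neg c (disj n \<phi> \<psi>))" using inA[OF sub WF disjI1[OF p wq WF]] .
  then show "derivable n \<Sigma> (ImpC ?H (neg c (disj n \<phi> \<psi>)))"
    using deduction WF0 wp wq wc by simp
next
  let ?H = "neg c (disj n \<phi> \<psi>)"
  let ?S = "insert ?H \<Sigma>"
  let ?G = "disj n (neg c \<phi>) (neg c \<psi>)"
  have WF: "\<forall>x\<in>?S. wf n x" using WF0 wp wq wc by auto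
  have sub: "\<Sigma> \<subseteq> ?S" by auto
  have d: "derivable n ?S (disj n \<phi> \<psi>)" using outA[OF sub WF hyp'] .
  have WF1: "\<forall>x\<in>insert \<phi> ?S. wf n x" using WF wp by auto
  have WF2: "\<forall>x\<in>insert \<psi> ?S. wf n x" using WF wq by auto
  have b1: "derivable n (insert \<phi> ?S) ?G"
    using disjI1[OF inA[OF _ WF1 hyp'] _ WF1] wc wq by auto
  have b2: "derivable n (insert \<psi> ?S) ?G"
    using disjI2[OF inA[OF _ WF2 hyp'] _ WF2] wc wp by auto
  have "derivable n ?S ?G" using disjE[OF d b1 b2 WF] .
  then show "derivable n \<Sigma> (ImpC ?H ?G)" using deduction WF0 wp wq wc by simp
next
  let ?H = "neg c (conj n \<phi> \<psi>)"
  let ?S = "insert ?H \<Sigma>"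
  let ?G = "disj n (neg c \<phi>) (neg c \<psi>)"
  have WF: "\<forall>x\<in>?S. wf n x" using WF0 wp wq wc by auto
  have sub: "\<Sigma> \<subseteq> ?S" by auto
  have d: "derivable n ?S (conj n \<phi> \<psi>)" using outA[OF sub WF hyp'] .
  have "derivable n ?S ?G" using disjI1[OF inA[OF sub WF conjE1[OF d WF]] _ WF] wc wq by auto
  then show "derivable n \<Sigma> (ImpC ?H ?G)" using deduction WF0 wp wq wc by simp
qed

lemma caseB:
  assumes WF0: "\<forall>x\<in>\<Sigma>. wf n x" and wp: "wf n \<phi>" and wq: "wf n \<psi>"
   and inB: "\<And>S X. \<Sigma> \<subseteq> S \<Longrightarrow> \<forall>x\<in>S. wf n x \<Longrightarrow> derivable n S (sneg n X) \<Longrightarrow> derivable n S (neg c X)"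
   and outB: "\<And>S X. \<Sigma> \<subseteq> S \<Longrightarrow> \<forall>x\<in>S. wf n x \<Longrightarrow> derivable n S (neg c X) \<Longrightarrow> derivable n S (sneg n X)"
   and wc: "\<And>X. wf n (neg c X) = wf n X"
  shows "derivable n \<Sigma> (ImpC (conj n (neg c \<phi>) (neg c \<psi>)) (neg c (conj n \<phi> \<psi>)))"
    and "derivable n \<Sigma> (ImpC (neg c (disj n \<phi> \<psi>)) (disj n (neg c \<phi>) (neg c \<psi>)))"
    and "derivable n \<Sigma> (ImpC (neg c (conj n \<phi> \<psi>)) (disj n (neg c \<phi>) (neg c \<psi>)))"
    and "derivable n \<Sigma> (ImpC (conj n (neg c \<phi>) (neg c \<psi>)) (neg c (disj n \<phi> \<psi>)))"
proof -
  let ?H = "conj n (neg c \<phi>) (neg c \<psi>)"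
  let ?S = "insert ?H \<Sigma>"
  have WF: "\<forall>x\<in>?S. wf n x" using WF0 wp wq wc by auto
  have sub: "\<Sigma> \<subseteq> ?S" by auto
  have np: "derivable n ?S (sneg n \<phi>)" using outB[OF sub WF conjE1[OF hyp' WF]] .
  have nq: "derivable n ?S (sneg n \<psi>)" using outB[OF sub WF conjE2[OF hyp' WF]] .
  have WF1: "\<forall>x\<in>insert (conj n \<phi> \<psi>) ?S. wf n x" using WF wp wq by auto
  have "derivable n ?S (sneg n (conj n \<phi> \<psi>))"
    using negI[OF conjE1[OF hyp' WF1] wk[OF np] WF] wp wq by simp
  then have "derivable n ?S (neg c (conj n \<phi> \<psi>))" using inB[OF sub WF] by blast
  then show "derivable n \<Sigma> (ImpC ?H (neg c (conj n \<phi> \<psi>)))"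
    using deduction WF0 wp wq wc by simp
  let ?U = "insert (disj n \<phi> \<psi>) ?S"
  have WF2: "\<forall>x\<in>?U. wf n x" using WF wp wq by auto
  have WF3: "\<forall>x\<in>insert \<psi> ?U. wf n x" using WF2 wq by auto
  have u1: "derivable n ?U \<phi>"
    using disjE[OF hyp' hyp' efq[OF hyp' wk[OF wk[OF nq]] WF3 wp] WF2] .
  have "derivable n ?S (sneg n (disj n \<phi> \<psi>))"
    using negI[OF u1 wk[OF np] WF] wp wq by simp
  then have "derivable n ?S (neg c (disj n \<phi> \<psi>))" using inB[OF sub WF] by blast
  then show "derivable n \<Sigma> (ImpC ?H (neg c (disj n \<phi> \<psi>)))"
    using deduction WF0 wp wq wc by simp
next
  let ?H = "neg c (disj n \<phi> \<psi>)"
  let ?S = "insert ?H \<Sigma>"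
  let ?G = "disj n (neg c \<phi>) (neg c \<psi>)"
  have WF: "\<forall>x\<in>?S. wf n x" using WF0 wp wq wc by auto
  have sub: "\<Sigma> \<subseteq> ?S" by auto
  have nd: "derivable n ?S (sneg n (disj n \<phi> \<psi>))" using outB[OF sub WF hyp'] .
  have WF1: "\<forall>x\<in>insert \<psi> ?S. wf n x" using WF wq by auto
  have "derivable n ?S (sneg n \<psi>)"
    using negI[OF disjI2[OF hyp' wp WF1] wk[OF nd] WF wq] .
  then have "derivable n ?S (neg c \<psi>)" using inB[OF sub WF] by blast
  then have "derivable n ?S ?G" using disjI2 WF wc wp by simp
  then show "derivable n \<Sigma> (ImpC ?H ?G)" using deduction WF0 wp wq wc by simp
next
  let ?H = "neg c (conj n \<phi> \<psi>)"
  let ?S = "insert ?H \<Sigma>"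
  have WF: "\<forall>x\<in>?S. wf n x" using WF0 wp wq wc by auto
  have sub: "\<Sigma> \<subseteq> ?S" by auto
  have nd: "derivable n ?S (sneg n (conj n \<phi> \<psi>))" using outB[OF sub WF hyp'] .
  let ?T = "insert (sneg n (neg c \<phi>)) ?S"
  have WFT: "\<forall>x\<in>?T. wf n x" using WF wp wc by auto
  have subT: "\<Sigma> \<subseteq> ?T" by auto
  let ?R = "insert (sneg n \<phi>) ?T"
  have WFR: "\<forall>x\<in>?R. wf n x" using WFT wp by auto
  have r1: "derivable n ?R (neg c \<phi>)" using inB[OF _ WFR hyp'] by blast
  have t1: "derivable n ?T \<phi>" using raa[OF r1 wk[OF hyp'] WFT wp] .
  have WF4: "\<forall>x\<in>insert \<psi> ?T. wf n x" using WFT wq by auto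
  have "derivable n ?T (sneg n \<psi>)"
    using negI[OF conjI'[OF wk[OF t1] hyp' WF4] wk[OF wk[OF nd]] WFT wq] .
  then have "derivable n ?T (neg c \<psi>)" using inB[OF subT WFT] by blast
  then have "derivable n ?S (disj n (neg c \<phi>) (neg c \<psi>))"
    unfolding disj_def using deduction WF wc wp by simp
  then show "derivable n \<Sigma> (ImpC ?H (disj n (neg c \<phi>) (neg c \<psi>)))"
    using deduction WF0 wp wq wc by simp
qed

lemma main_parts:
  assumes ch: "chain n c" and wp: "wf n \<phi>" and wq: "wf n \<psi>" and c'def: "c' = {1..n} - c"
  shows "(provable n (ImpC (bot c) (neg c' (conj n \<phi> (neg c' \<phi>))))) \<and>
           (provable n (ImpC (conj n (neg c \<phi>) (neg c \<psi>)) (neg c (conj n \<phi> \<psi>)))) \<and>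
           (provable n (ImpC (neg c (disj n \<phi> \<psi>)) (disj n (neg c \<phi>) (neg c \<psi>)))) \<and>
           (provable n (ImpC (neg c (conj n \<phi> \<psi>)) (disj n (neg c \<phi>) (neg c \<psi>)))) \<and>
           (provable n (ImpC (conj n (neg c \<phi>) (neg c \<psi>)) (neg c (disj n \<phi> \<psi>))))"
proof -
  have csub: "c \<subseteq> {1..n}" using ch by (simp add: chain_def)
  have wc: "\<And>X. wf n (neg c X) = wf n X" using wf_neg[OF csub] .
  have c'sub: "c' \<subseteq> {1..n}" using c'def by auto
  have wc': "\<And>X. wf n (neg c' X) = wf n X" using wf_neg[OF c'sub] .
  have WF0: "\<forall>x\<in>{}. wf n x" by simp
  let ?S = "{bot c}"
  have WFS: "\<forall>x\<in>?S. wf n x" using csub by simp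
  have chfull: "chain n {1..n}" using n1 by (auto simp: chain_def)
  show ?thesis
  proof (cases "c' = {}")
    case True
    then have cf: "c = {1..n}" using c'def csub by auto
    have ncX: "\<And>X. neg c X = sneg n X" using cf neg_full by simp
    let ?B = "conj n \<phi> \<phi>"
    let ?R = "insert (sneg n ?B) ?S"
    have WFR: "\<forall>x\<in>?R. wf n x" using WFS wp by simp
    have a4: "derivable n ?R (ImpC (sneg n ?B) (ImpC (bot c) (neg c (sneg n ?B))))"
      using wp ch by (intro derivable.ax axiom.A4) auto
    have "derivable n ?R (neg c (sneg n ?B))"
      using derivable.mp[OF derivable.hyp derivable.mp[OF hyp' a4]] by simp
    then have r: "derivable n ?R (sneg n (sneg n ?B))" using ncX by simp
    have "derivable n ?S ?B" using raa[OF hyp' r WFS] wp by simp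
    then have i: "provable n (ImpC (bot c) (neg c' (conj n \<phi> (neg c' \<phi>))))"
      using True deduction[OF _ WF0] csub by simp
    have inB: "\<And>S X. {} \<subseteq> S \<Longrightarrow> \<forall>x\<in>S. wf n x \<Longrightarrow> derivable n S (sneg n X) \<Longrightarrow> derivable n S (neg c X)"
      using ncX by simp
    have outB: "\<And>S X. {} \<subseteq> S \<Longrightarrow> \<forall>x\<in>S. wf n x \<Longrightarrow> derivable n S (neg c X) \<Longrightarrow> derivable n S (sneg n X)"
      using ncX by simp
    show ?thesis using i caseB[OF WF0 wp wq inB outB wc] by blast
  next
    case False
    have ch': "chain n c'" using False c'sub by (simp add: chain_def)
    have dis: "c' \<inter> c = {}" "c' \<union> c = {1..n}" using c'def csub by auto
    let ?H = "conj n \<phi> (neg c' \<phi>)"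
    let ?U = "insert ?H ?S"
    have WFU: "\<forall>x\<in>?U. wf n x" using WFS wp wc' by simp
    have u2: "derivable n ?U (sneg n \<phi>)"
      using L2out[OF ch' ch dis _ WFU conjE2[OF hyp' WFU]] by simp
    have "derivable n ?S (sneg n ?H)" using negI[OF conjE1[OF hyp' WFU] u2 WFS] wp wc' by simp
    then have "derivable n ?S (neg c' ?H)" using L2in[OF ch' ch dis _ WFS] by simp
    then have i: "provable n (ImpC (bot c) (neg c' (conj n \<phi> (neg c' \<phi>))))"
      using deduction[OF _ WF0] csub by simp
    have cc: "cocat {1..n} c = c'" using c'def csub by (auto simp: cocat_def)
    have "provable n (iff n (neg {1..n} (bot c)) (bot (cocat {1..n} c)))"
      using chfull ch by (intro derivable.ax axiom.A6)
    then have "provable n (iff n (sneg n (bot c)) (bot c'))" using cc neg_full by simp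
    then have split: "provable n (disj n (bot c) (bot c'))"
      unfolding disj_def using iffD1[OF _ WF0] by blast
    let ?A = "insert (bot c) {}"
    have WFA: "\<forall>x\<in>?A. wf n x" using csub by simp
    have A: "derivable n ?A (ImpC (conj n (neg c \<phi>) (neg c \<psi>)) (neg c (conj n \<phi> \<psi>)))"
      "derivable n ?A (ImpC (neg c (disj n \<phi> \<psi>)) (disj n (neg c \<phi>) (neg c \<psi>)))"
      "derivable n ?A (ImpC (neg c (conj n \<phi> \<psi>)) (disj n (neg c \<phi>) (neg c \<psi>)))"
      "derivable n ?A (ImpC (conj n (neg c \<phi>) (neg c \<psi>)) (neg c (disj n \<phi> \<psi>)))"
      by (rule caseA[OF WFA wp wq _ _ wc]; (rule L1in[OF ch] L1out[OF ch]; blast))+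
    let ?B = "insert (bot c') {}"
    have WFB: "\<forall>x\<in>?B. wf n x" using c'sub by simp
    have dis2: "c \<inter> c' = {}" "c \<union> c' = {1..n}" using c'def csub by auto
    have B: "derivable n ?B (ImpC (conj n (neg c \<phi>) (neg c \<psi>)) (neg c (conj n \<phi> \<psi>)))"
      "derivable n ?B (ImpC (neg c (disj n \<phi> \<psi>)) (disj n (neg c \<phi>) (neg c \<psi>)))"
      "derivable n ?B (ImpC (neg c (conj n \<phi> \<psi>)) (disj n (neg c \<phi>) (neg c \<psi>)))"
      "derivable n ?B (ImpC (conj n (neg c \<phi>) (neg c \<psi>)) (neg c (disj n \<phi> \<psi>)))"
      by (rule caseB[OF WFB wp wq _ _ wc]; (rule L2in[OF ch ch' dis2] L2out[OF ch ch' dis2]; blast))+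
    show ?thesis using i disjE[OF split A(1) B(1) WF0] disjE[OF split A(2) B(2) WF0]
      disjE[OF split A(3) B(3) WF0] disjE[OF split A(4) B(4) WF0] by blast
  qed
qed

end


theorem mainTheorem6:
  fixes n :: nat and c :: "nat set" and \<phi> \<psi> :: form
  assumes "n \<ge> 1" and "chain n c" and "wf n \<phi>" and "wf n \<psi>"
  defines "c' \<equiv> {1..n} - c"
  shows "(provable n (ImpC (bot c) (neg c' (conj n \<phi> (neg c' \<phi>))))) \<and>
           (provable n (ImpC (conj n (neg c \<phi>) (neg c \<psi>)) (neg c (conj n \<phi> \<psi>)))) \<and>
           (provable n (ImpC (neg c (disj n \<phi> \<psi>)) (disj n (neg c \<phi>) (neg c \<psi>)))) \<and>
           (provable n (ImpC (neg c (conj n \<phi> \<psi>)) (disj n (neg c \<phi>) (neg c \<psi>)))) \<and>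
           (provable n (ImpC (conj n (neg c \<phi>) (neg c \<psi>)) (neg c (disj n \<phi> \<psi>))))"
  using main_parts assms by blast

end
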